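(* Let $s\ge1$ and let constants $M,N,m_1,m_2,n_1,n_2$ satisfy $0<N<1$, $M>N+s$, $n_1>1+\sqrt3$, $n_2>1$, $m_1>\sqrt2$ and $$m_2>\max\Big[n_2,\ \Big(\frac{m_1n_1+Mm_1^2n_1+n_1^2}{m_1^2}\Big)^{1/(1-N)},\ \Big(\frac{n_1}{2m_1}(1+\sqrt5)\Big)^{1/(M-N-s)}\Big].$$ Set $m(0)=m_1m_2^M$, $n(0)=n_1n_2^N$. Consider the system $$\dot b=-\tfrac12 b^2-(t+1)^s a^2-a+1,\qquad \dot a=-ba,$$ and let $\Omega=\{(a,b)\in\mathbb R^2:\ a>0,\ b>0,\ b>m(0)a-n(0)\}$. If $(a_0,b_0)\in\Omega$, then $0<b(t)$ and $a(t)\le a_0$ for all $t\ge0$. *)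

theory Defs
  imports Complex_Main
begin

definition Omega :: "real \<Rightarrow> real \<Rightarrow> (real \<times> real) set" where
  "Omega m0 n0 = {(a, b). a > 0 \<and> b > 0 \<and> b > m0 * a - n0}"

end

theory Submission
  imports Defs "HOL-Analysis.Analysis"
begin


lemma algE:
  fixes mm u nn B P M X :: real
  assumes "mm > 0" "u > 0"
  shows "- (1/2) * B^2 - P * ((nn+B)/mm)^2 - (nn+B)/mm + 1 - (M/u*mm*((nn+B)/mm) + mm * (- B * ((nn+B)/mm))) + X
     = (1 - (P/mm^2) * nn^2 - (1/mm + M/u) * nn) + B * (nn - 2*(P/mm^2)*nn - (1/mm + M/u)) + B^2 * (1/2 - P/mm^2) + X"
  using assms by (simp add: field_simps power2_eq_square)

lemma keyF:
  fixes u v P A B m1 n1 M N s :: real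
  assumes u1: "1 < u" and v1: "1 \<le> v" "v \<le> u" and P: "0 \<le> P" "P \<le> u powr s"
    and s: "s \<ge> 1" and N: "0 < N" "N < 1" and M: "M > N + s"
    and m1: "m1 > 1.4" and n1: "n1 > 2.7"
    and uK: "u powr (1 - N) > (m1*n1 + M*m1^2*n1 + n1^2)/m1^2"
    and A: "A > 0" and B: "B \<ge> 0" "B = m1 * u powr M * A - n1 * v powr N"
  shows "- (1/2) * B^2 - P * A^2 - A + 1 - (m1 * M * u powr (M - 1) * A + m1 * u powr M * (- B * A))
          + n1 * N * v powr (N - 1) > 0"
proof -
  define mm where "mm = m1 * u powr M"
  define nn where "nn = n1 * v powr N"
  define c where "c = P / mm^2"
  define k where "k = 1/mm + M/u"
  define K0 where "K0 = (m1*n1 + M*m1^2*n1 + n1^2)/m1^2"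
  have u0: "u > 0" using u1 by simp
  have uM1: "u powr M \<ge> 1" using u1 M N s by (intro ge_one_powr_ge_zero) auto
  have mm1: "mm \<ge> m1" unfolding mm_def using uM1 m1 by simp
  have mm0: "mm > 0" using mm1 m1 by simp
  have vN1: "v powr N \<ge> 1" using v1 N by (intro ge_one_powr_ge_zero) auto
  have nn1: "nn \<ge> n1" unfolding nn_def using vN1 n1 by simp
  have vu: "v powr N \<le> u powr N" using v1 N by (intro powr_mono2) auto
  have nnu: "nn \<le> n1 * u powr N" unfolding nn_def using vu n1 by simp
  have Aeq: "A = (nn + B) / mm" using B(2) mm0 u0 m1 unfolding mm_def nn_def by (simp add: field_simps)
  have uM: "u powr (M - 1) = u powr M / u" using u0 by (simp add: powr_diff)
  have nn'0: "n1 * N * v powr (N - 1) \<ge> 0" using n1 N by simp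
  have K0pos: "K0 > 0" unfolding K0_def using m1 n1 M N s by (intro divide_pos_pos) (auto intro!: add_pos_pos mult_pos_pos)
  have uN1: "u powr (N - 1) = 1 / u powr (1 - N)"
    by (metis minus_diff_eq powr_minus inverse_eq_divide)
  have sq: "\<And>a. (u powr a)^2 = u powr (2*a)" by (simp add: power2_eq_square powr_add[symmetric])
  have t1: "c * nn^2 \<le> (n1^2/m1^2) * u powr (N - 1)"
  proof -
    have "c * nn^2 = P * nn^2 / (m1^2 * (u powr M)^2)" unfolding c_def mm_def by (simp add: power_mult_distrib)
    also have "\<dots> \<le> u powr s * (n1 * u powr N)^2 / (m1^2 * (u powr M)^2)"
      using P nnu nn1 n1 m1 by (intro divide_right_mono mult_mono power_mono) auto
    also have "\<dots> = (n1^2/m1^2) * (u powr s * u powr (2*N) / u powr (2*M))"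
      by (simp add: power_mult_distrib sq)
    also have "u powr s * u powr (2*N) / u powr (2*M) = u powr (s + 2*N - 2*M)"
      by (simp add: powr_add powr_diff)
    also have "(n1^2/m1^2) * u powr (s + 2*N - 2*M) \<le> (n1^2/m1^2) * u powr (N - 1)"
      using u1 M N s by (intro mult_left_mono powr_mono) auto
    finally show ?thesis .
  qed
  have t2: "nn / mm \<le> (n1/m1) * u powr (N - 1)"
  proof -
    have "nn / mm \<le> n1 * u powr N / (m1 * u powr M)" unfolding mm_def[symmetric]
      using nnu mm0 by (simp add: divide_right_mono)
    also have "\<dots> = (n1/m1) * u powr (N - M)" by (simp add: powr_diff)
    also have "\<dots> \<le> (n1/m1) * u powr (N - 1)" using u1 M N s m1 n1
      by (intro mult_left_mono powr_mono) auto
    finally show ?thesis .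
  qed
  have t3: "M / u * nn \<le> M * n1 * u powr (N - 1)"
  proof -
    have "M / u * nn \<le> M / u * (n1 * u powr N)" using nnu M N s u0 by (intro mult_left_mono) auto
    also have "\<dots> = M * n1 * u powr (N - 1)" using u0 by (simp add: powr_diff)
    finally show ?thesis .
  qed
  have main: "c * nn^2 + k * nn < 1"
  proof -
    have "c * nn^2 + k * nn = c * nn^2 + nn / mm + M / u * nn" unfolding k_def by (simp add: field_simps)
    also have "\<dots> \<le> K0 * u powr (N - 1)"
    proof -
      have "K0 * u powr (N - 1) = (n1^2/m1^2)*u powr (N-1) + (n1/m1)*u powr (N-1) + M*n1*u powr (N-1)"
        unfolding K0_def using m1 by (simp add: field_simps power2_eq_square)
      thus ?thesis using t1 t2 t3 by linarith
    qed
    also have "\<dots> < 1"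
    proof -
      have w0: "u powr (1-N) > 0" using u0 by simp
      have "K0 < u powr (1-N)" using uK unfolding K0_def .
      hence "K0 / u powr (1-N) < 1" using w0 by (simp add: pos_divide_less_eq)
      thus ?thesis unfolding uN1 by simp
    qed
    finally show ?thesis .
  qed
  have c0: "c \<ge> 0" unfolding c_def using P by simp
  have nnb: "nn > 2.7" using nn1 n1 by simp
  have cq: "c \<le> 1/4"
  proof -
    have k0: "k \<ge> 0" unfolding k_def using mm0 u0 M N s by simp
    have "k * nn \<ge> 0" using k0 nnb by simp
    hence cn: "c * nn^2 < 1" using main by linarith
    have "2*2 < nn*nn" using nnb by (intro mult_strict_mono) auto
    hence "4 \<le> nn^2" by (simp add: power2_eq_square)
    hence "c * 4 \<le> c * nn^2" using c0 by (rule mult_left_mono)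
    thus ?thesis using cn by linarith
  qed
  have Mu: "M / u < 1 / n1"
  proof -
    have "u powr (1 - N) \<le> u powr 1" using u1 N by (intro powr_mono) auto
    hence "u \<ge> u powr (1 - N)" using u0 by simp
    moreover have "K0 > M * n1"
    proof -
      have "K0 = n1/m1 + M*n1 + n1^2/m1^2" unfolding K0_def using m1
        by (simp add: add_divide_distrib power2_eq_square)
      moreover have "n1/m1 > 0" "n1^2/m1^2 > 0" using m1 n1 by auto
      ultimately show ?thesis by linarith
    qed
    ultimately have "u > M * n1" using uK K0_def by simp
    thus ?thesis using n1 u0 M N s by (simp add: field_simps)
  qed
  have kb: "k \<le> nn * (1 - 2*c)"
  proof -
    have "1 / mm \<le> 1 / m1" using mm1 m1 by (simp add: frac_le)
    moreover have "1/m1 < 72/100" using m1 by (simp add: field_simps)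
    moreover have "1/n1 < 38/100" using n1 by (simp add: field_simps)
    moreover have "nn * (1 - 2*c) \<ge> nn / 2" using cq nnb by (simp add: field_simps)
    ultimately show ?thesis using Mu nnb unfolding k_def by linarith
  qed
  have E: "- (1/2) * B^2 - P * A^2 - A + 1 - (m1 * M * u powr (M - 1) * A + m1 * u powr M * (- B * A))
          + n1 * N * v powr (N - 1)
        = (1 - c * nn^2 - k * nn) + B * (nn - 2*c*nn - k) + B^2 * (1/2 - c) + n1 * N * v powr (N - 1)"
  proof -
    have e1: "m1 * M * u powr (M - 1) * A = M/u*mm*A" unfolding uM mm_def by simp
    have e2: "m1 * u powr M = mm" by (simp add: mm_def)
    show ?thesis unfolding e1 e2 unfolding Aeq c_def k_def by (rule algE[OF mm0 u0])
  qed
  have "nn - 2*c*nn - k \<ge> 0" using kb by (simp add: algebra_simps)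
  hence "B * (nn - 2*c*nn - k) \<ge> 0" using B(1) by simp
  moreover have "B^2 * (1/2 - c) \<ge> 0" using cq by simp
  ultimately show ?thesis unfolding E using main nn'0 by linarith
qed


lemma keyB:
  fixes u v P A m1 n1 M N s :: real
  assumes u1: "1 < u" and v1: "1 \<le> v" "v \<le> u" and P: "0 \<le> P" "P \<le> u powr s"
    and s: "s \<ge> 1" and N: "0 < N" and M: "M > N + s"
    and m1: "m1 > 0" and n1: "n1 > 0"
    and uC: "u powr (M - N - s) > n1 / (2 * m1) * (1 + sqrt 5)"
    and A: "A \<ge> 0" and AB: "m1 * u powr M * A \<le> n1 * v powr N"
  shows "P * A^2 + A < 1"
proof -
  have u0: "u > 0" using u1 by simp
  define r where "r = (n1/m1) * u powr (N - M)"
  define z where "z = (n1/m1) * u powr (N + s - M)"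
  have vu: "v powr N \<le> u powr N" using v1 N by (intro powr_mono2) auto
  have "m1 * u powr M * A \<le> n1 * u powr N" using AB vu n1 by (smt (verit) mult_left_mono)
  hence "A \<le> n1 * u powr N / (m1 * u powr M)" using m1 u0 by (simp add: pos_le_divide_eq mult.commute)
  also have "n1 * u powr N / (m1 * u powr M) = r" unfolding r_def by (simp add: powr_diff)
  finally have Ar: "A \<le> r" .
  have r0: "r \<ge> 0" unfolding r_def using m1 n1 by simp
  have rz: "r \<le> z" unfolding r_def z_def using m1 n1 u1 s by (intro mult_left_mono powr_mono) auto
  have sq: "\<And>a. (u powr a)^2 = u powr (2*a)" by (simp add: power2_eq_square powr_add[symmetric])
  have "P * A^2 \<le> u powr s * r^2" using P A Ar by (intro mult_mono power_mono) auto
  also have "u powr s * r^2 = (n1/m1)^2 * u powr (s + 2*(N - M))"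
  proof -
    have "r^2 = (n1/m1)^2 * u powr (2*(N-M))" unfolding r_def power_mult_distrib sq by (rule refl)
    thus ?thesis unfolding powr_add[of u s] by (simp only: ac_simps)
  qed
  also have "\<dots> \<le> (n1/m1)^2 * u powr (2*(N + s - M))" using u1 s by (intro mult_left_mono powr_mono) auto
  also have "\<dots> = z^2" unfolding z_def power_mult_distrib sq by (rule refl)
  finally have PA: "P * A^2 \<le> z^2" .
  define w where "w = (sqrt 5 - 1)/2"
  have s5: "sqrt 5 * sqrt 5 = 5" by simp
  have w1: "w^2 + w = 1" unfolding w_def using s5 by (simp add: power2_eq_square field_simps)
  have zeq: "z = (n1/m1) / u powr (M - N - s)"
  proof -
    have "u powr (N + s - M) = 1 / u powr (M - N - s)"
      by (metis minus_diff_eq powr_minus inverse_eq_divide diff_diff_eq2 add.commute diff_diff_eq)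
    thus ?thesis unfolding z_def by simp
  qed
  have up: "u powr (M - N - s) > 0" using u0 by simp
  have "z * (1 + sqrt 5) < 2"
  proof -
    have "z * (1 + sqrt 5) = (n1/m1) * (1 + sqrt 5) / u powr (M - N - s)" unfolding zeq by simp
    also have "\<dots> < 2"
    proof -
      have "n1/(2*m1)*(1+sqrt 5) = (n1/m1*(1+sqrt 5))/2" by simp
      hence h: "n1/m1*(1+sqrt 5)/2 < u powr (M - N - s)" using uC by simp
      have "\<And>X U::real. X/2 < U \<Longrightarrow> X < 2*U" by simp
      from this[OF h] have "n1/m1*(1+sqrt 5) < 2 * u powr (M - N - s)" .
      moreover have "\<And>X U::real. U > 0 \<Longrightarrow> X < 2*U \<Longrightarrow> X/U < 2" by (simp add: pos_divide_less_eq mult.commute)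
      ultimately show ?thesis using up by blast
    qed
    finally show ?thesis .
  qed
  moreover have "w * (1 + sqrt 5) = 2" unfolding w_def using s5 by (simp add: field_simps)
  ultimately have zw: "z < w" by (smt (verit) mult_right_mono real_sqrt_ge_zero)
  have z0: "z \<ge> 0" using r0 rz by simp
  have "z^2 \<le> w^2" using z0 zw by (intro power_mono) auto
  hence "z^2 + z < 1" using zw w1 by linarith
  thus ?thesis using PA Ar rz by linarith
qed

lemma end_nonneg:
  fixes f :: "real \<Rightarrow> real"
  assumes T: "T > 0" and c: "continuous_on {0..T} f" and p: "\<And>t. 0 \<le> t \<Longrightarrow> t < T \<Longrightarrow> f t > 0"
  shows "f T \<ge> 0"
proof (rule ccontr)
  assume "\<not> f T \<ge> 0"
  hence fT: "f T < 0" by simp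
  have "f 0 > 0" using p T by simp
  then obtain x where x: "0 \<le> x" "x \<le> T" "f x = 0" using IVT2'[of f T 0 0, OF _ _ _ c] fT T by force
  have "x \<noteq> T" using fT x by auto
  hence "x < T" using x by simp
  hence "f x > 0" using p[OF x(1)] by blast
  thus False using x by simp
qed

lemma noleft:
  fixes f :: "real \<Rightarrow> real"
  assumes T: "T > 0" and d: "DERIV f T :> D" and D: "D > 0" and fT: "f T \<le> 0"
    and p: "\<And>t. 0 \<le> t \<Longrightarrow> t < T \<Longrightarrow> f t > 0"
  shows False
proof -
  obtain d where d0: "d > 0" and hd: "\<And>h. h > 0 \<Longrightarrow> h < d \<Longrightarrow> f (T - h) < f T"
    using DERIV_pos_inc_left[OF d D] by blast
  define h where "h = min (d/2) (T/2)"
  have h: "h > 0" "h < d" "h < T" unfolding h_def using d0 T by auto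
  have "f (T - h) < f T" using hd h by simp
  moreover have "f (T - h) > 0" using p h by simp
  ultimately show False using fT by simp
qed

lemma at_T: "T > (0::real) \<Longrightarrow> at T within {0..} = at T"
  by (rule at_within_interior) simp
theorem lemma4p3:
  fixes s M N m1 m2 n1 n2 a0 b0 :: real
    and a b :: "real \<Rightarrow> real"
  assumes hs: "s \<ge> 1"
    and hN: "0 < N" "N < 1"
    and hM: "M > N + s"
    and hn1: "n1 > 1 + sqrt 3"
    and hn2: "n2 > 1"
    and hm1: "m1 > sqrt 2"
    and hm2: "m2 > max n2 (max
               (((m1 * n1 + M * m1\<^sup>2 * n1 + n1\<^sup>2) / m1\<^sup>2) powr (1 / (1 - N)))
               ((n1 / (2 * m1) * (1 + sqrt 5)) powr (1 / (M - N - s))))"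
    and hb': "\<And>t. t \<ge> 0 \<Longrightarrow>
               (b has_real_derivative (- (1/2) * (b t)\<^sup>2 - (t + 1) powr s * (a t)\<^sup>2 - a t + 1))
                 (at t within {0..})"
    and ha': "\<And>t. t \<ge> 0 \<Longrightarrow>
               (a has_real_derivative (- b t * a t)) (at t within {0..})"
    and hinit: "a 0 = a0" "b 0 = b0"
    and hOmega: "(a0, b0) \<in> Omega (m1 * m2 powr M) (n1 * n2 powr N)"
  shows "\<forall>t \<ge> 0. 0 < b t \<and> a t \<le> a0"
proof -
  define m where "m = (\<lambda>t::real. m1 * (t + m2) powr M)"
  define n where "n = (\<lambda>t::real. n1 * (t + n2) powr N)"
  define F where "F = (\<lambda>t. b t - m t * a t + n t)"
  define DF where "DF = (\<lambda>t. - (1/2) * (b t)^2 - (t + 1) powr s * (a t)^2 - a t + 1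
      - (m1 * M * (t + m2) powr (M - 1) * a t + m1 * (t + m2) powr M * (- b t * a t))
      + n1 * N * (t + n2) powr (N - 1))"
  define K0 where "K0 = (m1 * n1 + M * m1\<^sup>2 * n1 + n1\<^sup>2) / m1\<^sup>2"
  define C where "C = n1 / (2 * m1) * (1 + sqrt 5)"
  have s2: "sqrt 2 > 7/5" by (rule real_less_rsqrt) (simp add: power2_eq_square)
  have s3: "sqrt 3 > 17/10" by (rule real_less_rsqrt) (simp add: power2_eq_square)
  have m1b: "m1 > 7/5" using hm1 s2 by linarith
  have n1b: "n1 > 27/10" using hn1 s3 by linarith
  have m2n2: "m2 > n2" using hm2 by simp
  have m21: "m2 > 1" using m2n2 hn2 by simp
  have K0pos: "K0 > 0" unfolding K0_def using m1b n1b hM hN hs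
    by (intro divide_pos_pos) (auto intro!: add_pos_pos mult_pos_pos)
  have Cpos: "C > 0" unfolding C_def using m1b n1b by (intro mult_pos_pos add_pos_nonneg) auto
  have m2K: "m2 powr (1 - N) > K0"
  proof -
    have "m2 > K0 powr (1 / (1 - N))" using hm2 unfolding K0_def by simp
    hence "(K0 powr (1 / (1 - N))) powr (1 - N) < m2 powr (1 - N)"
      using hN by (intro powr_less_mono2) auto
    thus ?thesis using hN K0pos by (simp add: powr_powr)
  qed
  have m2C: "m2 powr (M - N - s) > C"
  proof -
    have "m2 > C powr (1 / (M - N - s))" using hm2 unfolding C_def by simp
    hence "(C powr (1 / (M - N - s))) powr (M - N - s) < m2 powr (M - N - s)"
      using hM by (intro powr_less_mono2) auto
    thus ?thesis using hM Cpos by (simp add: powr_powr)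
  qed
  have uK: "(t + m2) powr (1 - N) > K0" if "t \<ge> 0" for t
  proof -
    have "m2 powr (1 - N) \<le> (t + m2) powr (1 - N)" using that hN m21 by (intro powr_mono2) auto
    thus ?thesis using m2K by simp
  qed
  have uC: "(t + m2) powr (M - N - s) > C" if "t \<ge> 0" for t
  proof -
    have "m2 powr (M - N - s) \<le> (t + m2) powr (M - N - s)" using that hM m21 by (intro powr_mono2) auto
    thus ?thesis using m2C by simp
  qed
  have Ps: "(t + 1) powr s \<le> (t + m2) powr s" if "t \<ge> 0" for t
    using that hs m21 by (intro powr_mono2) auto
  have dm: "(m has_real_derivative m1 * (M * (t + m2) powr (M - 1))) (at t)" if "t \<ge> 0" for t
  proof -
    have "((\<lambda>t. (t + m2) powr M) has_real_derivative M * (t + m2) powr (M - of_nat 1) * 1) (at t)"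
      using that m21 by (intro DERIV_fun_powr derivative_eq_intros) auto
    hence "((\<lambda>t. m1 * (t + m2) powr M) has_real_derivative m1 * (M * (t + m2) powr (M - 1))) (at t)"
      by (auto intro!: DERIV_cmult)
    thus ?thesis unfolding m_def .
  qed
  have dn: "(n has_real_derivative n1 * (N * (t + n2) powr (N - 1))) (at t)" if "t \<ge> 0" for t
  proof -
    have "((\<lambda>t. (t + n2) powr N) has_real_derivative N * (t + n2) powr (N - of_nat 1) * 1) (at t)"
      using that hn2 by (intro DERIV_fun_powr derivative_eq_intros) auto
    hence "((\<lambda>t. n1 * (t + n2) powr N) has_real_derivative n1 * (N * (t + n2) powr (N - 1))) (at t)"
      by (auto intro!: DERIV_cmult)
    thus ?thesis unfolding n_def .
  qed
  have dF: "(F has_real_derivative DF t) (at t within {0..})" if "t \<ge> 0" for t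
  proof -
    have "(F has_real_derivative
        (- (1/2) * (b t)\<^sup>2 - (t + 1) powr s * (a t)\<^sup>2 - a t + 1)
        - (m1 * (M * (t + m2) powr (M - 1)) * a t + (- b t * a t) * m t)
        + n1 * (N * (t + n2) powr (N - 1))) (at t within {0..})"
      unfolding F_def
      by (intro DERIV_add DERIV_diff DERIV_mult hb'[OF that] ha'[OF that]
            has_field_derivative_at_within[OF dm[OF that]] has_field_derivative_at_within[OF dn[OF that]])
    thus ?thesis by (rule DERIV_cong) (simp add: DF_def m_def algebra_simps)
  qed
  have ca: "continuous_on {0..} a" using ha' by (intro DERIV_continuous_on) auto
  have cb: "continuous_on {0..} b" using hb' by (intro DERIV_continuous_on) auto
  have cF: "continuous_on {0..} F" using dF by (intro DERIV_continuous_on) auto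
  define h where "h = (\<lambda>t. min (a t) (min (b t) (F t)))"
  have ch: "continuous_on {0..} h" unfolding h_def using ca cb cF by (intro continuous_on_min)
  define S where "S = {0..} \<inter> h -` {..0}"
  have clS: "closed S" unfolding S_def using ch by (intro continuous_closed_preimage) auto
  have Q0: "a 0 > 0 \<and> b 0 > 0 \<and> F 0 > 0" using hOmega hinit unfolding Omega_def F_def m_def n_def by auto
  have Sempty: "S = {}"
  proof (rule ccontr)
    assume ne: "S \<noteq> {}"
    have bdd: "bdd_below S" unfolding S_def by (rule bdd_belowI[of _ 0]) auto
    define T where "T = Inf S"
    have TS: "T \<in> S" unfolding T_def using closed_contains_Inf[OF ne bdd clS] .
    have T0: "T \<ge> 0" using TS unfolding S_def by auto
    have before: "a t > 0 \<and> b t > 0 \<and> F t > 0" if "0 \<le> t" "t < T" for t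
    proof -
      have "t \<notin> S" using that cInf_lower[OF _ bdd, of t] unfolding T_def[symmetric] by force
      thus ?thesis using that unfolding S_def h_def by auto
    qed
    have "0 \<notin> S" using Q0 unfolding S_def h_def by auto
    hence Tpos: "T > 0" using TS T0 by (cases "T = 0") auto
    have sub: "{0..T} \<subseteq> {0..}" by auto
    have aT: "a T > 0"
    proof -
      have "compact (b ` {0..T})" using continuous_on_subset[OF cb sub] by (intro compact_continuous_image) auto
      hence "bounded (b ` {0..T})" by (rule compact_imp_bounded)
      then obtain K where K: "K > 0" "\<And>x. x \<in> b ` {0..T} \<Longrightarrow> norm x \<le> K" unfolding bounded_pos by blast
      have Kb: "b t \<le> K" if "0 \<le> t" "t \<le> T" for t using K(2)[of "b t"] that by auto
      define g where "g = (\<lambda>t. a t * exp (K * t))"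
      have "g 0 \<le> g T"
      proof (rule DERIV_nonneg_imp_increasing_open[OF T0])
        fix x assume x: "0 < x" "x < T"
        have dax: "(a has_real_derivative (- b x * a x)) (at x)" using ha'[of x] x at_T[of x] by simp
        have de: "((\<lambda>t. exp (K * t)) has_real_derivative exp (K * x) * K) (at x)"
          by (auto intro!: derivative_eq_intros)
        have "(g has_real_derivative (- b x * a x) * exp (K * x) + (exp (K * x) * K) * a x) (at x)"
          unfolding g_def by (intro DERIV_mult dax de)
        moreover have "(- b x * a x) * exp (K * x) + (exp (K * x) * K) * a x = a x * exp (K * x) * (K - b x)"
          by (simp add: algebra_simps)
        moreover have "a x * exp (K * x) * (K - b x) \<ge> 0" using before[of x] x Kb[of x] by simp
        ultimately show "\<exists>y. (g has_real_derivative y) (at x) \<and> 0 \<le> y" by auto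
      next
        show "continuous_on {0..T} g" unfolding g_def using continuous_on_subset[OF ca sub]
          by (intro continuous_intros) auto
      qed
      hence "a0 \<le> a T * exp (K * T)" unfolding g_def using hinit by simp
      moreover have "a0 > 0" using Q0 hinit by simp
      ultimately have "a T * exp (K * T) > 0" by simp
      thus ?thesis by (simp add: zero_less_mult_iff)
    qed
    have bT: "b T \<ge> 0" using Tpos continuous_on_subset[OF cb sub] before by (intro end_nonneg) auto
    have FT: "F T \<ge> 0" using Tpos continuous_on_subset[OF cF sub] before by (intro end_nonneg) auto
    have "b T \<le> 0 \<or> F T \<le> 0" using TS aT unfolding S_def h_def by auto
    thus False
    proof
      assume "b T \<le> 0"
      hence b0: "b T = 0" using bT by simp
      have "m T * a T \<le> n T" using FT b0 unfolding F_def by simp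
      hence "(T + 1) powr s * (a T)^2 + a T < 1"
        using keyB[of "T + m2" "T + n2" "(T + 1) powr s" s N M m1 n1 "a T"]
          m21 m2n2 hn2 T0 Ps[OF T0] hs hN hM m1b n1b uC[OF T0] aT unfolding C_def m_def n_def by auto
      hence D: "- (1/2) * (b T)\<^sup>2 - (T + 1) powr s * (a T)\<^sup>2 - a T + 1 > 0" using b0 by simp
      show False
        using noleft[of T b, OF Tpos _ D] hb'[OF T0] at_T[OF Tpos] b0 before by auto
    next
      assume "F T \<le> 0"
      hence F0: "F T = 0" using FT by simp
      have B: "b T = m1 * (T + m2) powr M * a T - n1 * (T + n2) powr N"
        using F0 unfolding F_def m_def n_def by simp
      have D: "DF T > 0" unfolding DF_def
        using keyF[of "T + m2" "T + n2" "(T + 1) powr s" s N M m1 n1 "a T" "b T"]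
          m21 m2n2 hn2 T0 Ps[OF T0] hs hN hM m1b n1b uK[OF T0] aT bT B unfolding K0_def by auto
      show False
        using noleft[of T F, OF Tpos _ D] dF[OF T0] at_T[OF Tpos] F0 before by auto
    qed
  qed
  have pos: "a t > 0 \<and> b t > 0" if "t \<ge> 0" for t
    using Sempty that unfolding S_def h_def by auto
  show ?thesis
  proof (intro allI impI conjI)
    fix t :: real assume t: "t \<ge> 0"
    show "0 < b t" using pos[OF t] by simp
    have "a t \<le> a 0"
    proof (rule DERIV_nonpos_imp_decreasing_open[OF t])
      fix x assume x: "0 < x" "x < t"
      have "(a has_real_derivative (- b x * a x)) (at x)" using ha'[of x] x at_T[of x] by simp
      moreover have "- b x * a x \<le> 0" using pos[of x] x by simp
      ultimately show "\<exists>y. (a has_real_derivative y) (at x) \<and> y \<le> 0" by blast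
    next
      show "continuous_on {0..t} a" using continuous_on_subset[OF ca] by auto
    qed
    thus "a t \<le> a0" using hinit by simp
  qed
qed

end
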